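(* Let $(\mathcal{X},Y)$ and $(\mathcal{X}',Y')$ be finite regular CW pairs. Suppose there is a poset isomorphism $\varphi:\mathcal{X}\to\mathcal{X}'$ of cell posets with $\varphi(\mathcal{X}_Y)=\mathcal{X}'_{Y'}$. Then there exists a homeomorphism $\Phi:|\mathcal{X}|\to|\mathcal{X}'|$ mapping each cell $\sigma$ onto $\varphi(\sigma)$ and mapping $Y$ onto $Y'$.
   Context: Cells. Let $X$ be Hausdorff. A subset $\sigma\subset X$ is an $n$-cell if there is a homeomorphism $\alpha:D^n\to\sigma$ from the closed unit ball. Its relative boundary is $d\sigma=\alpha(\partial D^n)$. Regular CW complexes. A finite regular CW complex $\mathcal{X}$ with support $|\mathcal{X}|=X$ is a finite collection of cells in $X$ such that - their relative interiors $\sigma\setminus d\sigma$ partition $X$, and - each relative boundary $d\sigma$ is a union of cells of $\mathcal{X}$ of smaller dimension. The cell poset is $\mathcal{X}$ ordered by inclusion. Standard pairs. A pair $\tau\subset\sigma$ is a standard pair of cells of codimension $k$ if some homeomorphism $\alpha:D^n\to\sigma$ has $\alpha^{-1}(\tau)=\{x\in D^n:x_1=\dots=x_k=0\}$. Regular CW pairs. A finite regular CW pair of codimension $k$ is $(\mathcal{X},Y)$ with $\mathcal{X}$ a finite regular CW complex and $Y\subset|\mathcal{X}|$ such that for every $\sigma\in\mathcal{X}$ either $\sigma\cap Y=\emptyset$ or $\sigma\cap Y\subset\sigma$ is a standard pair of cells of codimension $k$. Write $\mathcal{X}_Y=\{\sigma\in\mathcal{X}:\sigma\cap Y\ne\emptyset\}$.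 *)

theory Defs
  imports "HOL-Analysis.Analysis"
begin

text \<open>Closed unit ball D^n and unit sphere in R^n, with R^n = Euclidean_space n
  (functions nat => real vanishing from index n on; coordinate x_i is x (i-1)).\<close>

definition disc :: "nat \<Rightarrow> (nat \<Rightarrow> real) set" where
  "disc n = {x \<in> topspace (Euclidean_space n). (\<Sum>i<n. (x i)\<^sup>2) \<le> 1}"

definition disc_boundary :: "nat \<Rightarrow> (nat \<Rightarrow> real) set" where
  "disc_boundary n = {x \<in> topspace (Euclidean_space n). (\<Sum>i<n. (x i)\<^sup>2) = 1}"

definition cell_param :: "'a topology \<Rightarrow> nat \<Rightarrow> 'a set \<Rightarrow> ((nat \<Rightarrow> real) \<Rightarrow> 'a) \<Rightarrow> bool" where
  "cell_param X n \<sigma> \<alpha> \<longleftrightarrow> \<sigma> \<subseteq> topspace X \<and>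
     homeomorphic_map (subtopology (Euclidean_space n) (disc n)) (subtopology X \<sigma>) \<alpha>"

definition is_cell :: "'a topology \<Rightarrow> nat \<Rightarrow> 'a set \<Rightarrow> bool" where
  "is_cell X n \<sigma> \<longleftrightarrow> (\<exists>\<alpha>. cell_param X n \<sigma> \<alpha>)"

text \<open>Dimension and relative boundary of a cell (well defined by invariance of domain).\<close>
definition cell_dim :: "'a topology \<Rightarrow> 'a set \<Rightarrow> nat" where
  "cell_dim X \<sigma> = (SOME n. is_cell X n \<sigma>)"

definition cell_boundary :: "'a topology \<Rightarrow> 'a set \<Rightarrow> 'a set" where
  "cell_boundary X \<sigma> = (SOME B. \<exists>n \<alpha>. cell_param X n \<sigma> \<alpha> \<and> B = \<alpha> ` disc_boundary n)"

definition cell_interior :: "'a topology \<Rightarrow> 'a set \<Rightarrow> 'a set" where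
  "cell_interior X \<sigma> = \<sigma> - cell_boundary X \<sigma>"

definition finite_regular_CW :: "'a topology \<Rightarrow> 'a set set \<Rightarrow> bool" where
  "finite_regular_CW X \<X> \<longleftrightarrow>
     Hausdorff_space X \<and> finite \<X> \<and>
     (\<forall>\<sigma>\<in>\<X>. \<exists>n. is_cell X n \<sigma>) \<and>
     (\<Union>\<sigma>\<in>\<X>. cell_interior X \<sigma>) = topspace X \<and>
     (\<forall>\<sigma>\<in>\<X>. \<forall>\<tau>\<in>\<X>. \<sigma> \<noteq> \<tau> \<longrightarrow> cell_interior X \<sigma> \<inter> cell_interior X \<tau> = {}) \<and>
     (\<forall>\<sigma>\<in>\<X>. \<exists>\<C>\<subseteq>\<X>. (\<forall>\<tau>\<in>\<C>. cell_dim X \<tau> < cell_dim X \<sigma>) \<and>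
                       cell_boundary X \<sigma> = \<Union>\<C>)"

definition standard_pair :: "'a topology \<Rightarrow> nat \<Rightarrow> 'a set \<Rightarrow> 'a set \<Rightarrow> bool" where
  "standard_pair X k \<tau> \<sigma> \<longleftrightarrow> \<tau> \<subseteq> \<sigma> \<and>
     (\<exists>n \<alpha>. k \<le> n \<and> cell_param X n \<sigma> \<alpha> \<and>
            {x \<in> disc n. \<alpha> x \<in> \<tau>} = {x \<in> disc n. \<forall>i<k. x i = 0})"

definition finite_regular_CW_pair :: "'a topology \<Rightarrow> 'a set set \<Rightarrow> 'a set \<Rightarrow> nat \<Rightarrow> bool" where
  "finite_regular_CW_pair X \<X> Y k \<longleftrightarrow>
     finite_regular_CW X \<X> \<and> Y \<subseteq> topspace X \<and>
     (\<forall>\<sigma>\<in>\<X>. \<sigma> \<inter> Y = {} \<or> standard_pair X k (\<sigma> \<inter> Y) \<sigma>)"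

definition cells_meeting :: "'a set set \<Rightarrow> 'a set \<Rightarrow> 'a set set" where
  "cells_meeting \<X> Y = {\<sigma> \<in> \<X>. \<sigma> \<inter> Y \<noteq> {}}"

definition poset_iso :: "('a set \<Rightarrow> 'b set) \<Rightarrow> 'a set set \<Rightarrow> 'b set set \<Rightarrow> bool" where
  "poset_iso \<phi> \<X> \<X>' \<longleftrightarrow> bij_betw \<phi> \<X> \<X>' \<and>
     (\<forall>\<sigma>\<in>\<X>. \<forall>\<tau>\<in>\<X>. \<sigma> \<subseteq> \<tau> \<longleftrightarrow> \<phi> \<sigma> \<subseteq> \<phi> \<tau>)"

end

theory Submission
  imports Defs "HOL-Homology.Invariance_of_Domain"
begin

definition ssum :: "nat \<Rightarrow> (nat \<Rightarrow> real) \<Rightarrow> real" where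
  "ssum n x = (\<Sum>i<n. (x i)\<^sup>2)"

definition Ek :: "nat \<Rightarrow> (nat \<Rightarrow> real) set" where
  "Ek k = {x. \<forall>i<k. x i = 0}"

lemma coord_cont: "continuous_on S (\<lambda>x::nat\<Rightarrow>real. x i)"
  by (rule continuous_on_subset[OF continuous_on_product_coordinates]) simp

lemma ssum_cont [continuous_intros]: "continuous_on S (ssum n)"
  unfolding ssum_def by (intro continuous_intros coord_cont)

lemma ssum_nonneg: "ssum n x \<ge> 0"
  unfolding ssum_def by (simp add: sum_nonneg)

lemma disc_alt: "disc n = {x. (\<forall>i\<ge>n. x i = 0) \<and> ssum n x \<le> 1}"
  by (simp add: disc_def ssum_def topspace_Euclidean_space)

lemma sph_alt: "disc_boundary n = {x. (\<forall>i\<ge>n. x i = 0) \<and> ssum n x = 1}"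
  by (simp add: disc_boundary_def ssum_def topspace_Euclidean_space)

lemma ssum_zero_imp:
  assumes "\<forall>i\<ge>n. x i = 0" "ssum n x = 0" shows "x = (\<lambda>i. 0)"
proof
  fix i show "x i = 0"
  proof (cases "i < n")
    case True
    have "\<forall>j\<in>{..<n}. (x j)\<^sup>2 = 0"
      using assms(2) unfolding ssum_def by (subst sum_nonneg_eq_0_iff[symmetric]) auto
    then show ?thesis using True by auto
  qed (use assms in auto)
qed

lemma ssum_scale: "ssum n (\<lambda>i. c * x i) = c\<^sup>2 * ssum n x"
  unfolding ssum_def by (simp add: sum_distrib_left power_mult_distrib)

lemma sph_coord_bound:
  assumes "z \<in> disc_boundary m" shows "\<bar>z i\<bar> \<le> 1"
proof (cases "i < m")
  case True
  have "(z i)\<^sup>2 \<le> ssum m z" unfolding ssum_def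
    using True by (intro member_le_sum) auto
  then have "(z i)\<^sup>2 \<le> 1" using assms by (simp add: sph_alt)
  then show ?thesis by (metis abs_le_square_iff abs_one one_power2)
next
  case False then show ?thesis using assms by (simp add: sph_alt)
qed

lemma zero_in_disc: "(\<lambda>i. 0) \<in> disc n"
  by (simp add: disc_alt ssum_def)

lemma cone_ext:
  assumes hc: "continuous_on (disc_boundary n) h"
    and hi: "h ` disc_boundary n = disc_boundary m"
    and hj: "inj_on h (disc_boundary n)"
  obtains g where "continuous_on (disc n) g" "g ` disc n = disc m" "inj_on g (disc n)"
    "\<forall>x\<in>disc_boundary n. g x = h x"
    "\<And>k. h ` (disc_boundary n \<inter> Ek k) = disc_boundary m \<inter> Ek k \<Longrightarrow>
           g ` (disc n \<inter> Ek k) = disc m \<inter> Ek k"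
proof -
  define r where "r x = sqrt (ssum n x)" for x
  define u where "u x = (\<lambda>i. x i / r x)" for x
  define g where "g x = (if r x = 0 then (\<lambda>i. 0) else (\<lambda>i. r x * h (u x) i))" for x
  have r0: "x = (\<lambda>i. 0)" if "x \<in> disc n" "r x = 0" for x
    using that ssum_zero_imp[of n x] by (auto simp: r_def disc_alt)
  have u_sph: "u x \<in> disc_boundary n" if "x \<in> disc n" "r x \<noteq> 0" for x
  proof -
    have "ssum n (u x) = (1 / r x)\<^sup>2 * ssum n x"
      unfolding u_def using ssum_scale[of n "1 / r x" x] by simp
    also have "\<dots> = 1" using that ssum_nonneg[of n x]
      by (simp add: r_def power_divide)
    finally show ?thesis using that by (auto simp: sph_alt disc_alt u_def)
  qed
  have ux: "x = (\<lambda>i. r x * u x i)" if "r x \<noteq> 0" for x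
    using that by (auto simp: u_def)
  have hs: "h s \<in> disc_boundary m" if "s \<in> disc_boundary n" for s
    using hi that by blast
  have ssum_g: "ssum m (g x) = (r x)\<^sup>2" if "x \<in> disc n" for x
  proof (cases "r x = 0")
    case True then show ?thesis by (simp add: g_def ssum_def)
  next
    case False
    have "ssum m (g x) = (r x)\<^sup>2 * ssum m (h (u x))"
      using False ssum_scale[of m "r x" "h (u x)"] by (simp add: g_def)
    also have "\<dots> = (r x)\<^sup>2" using hs[OF u_sph[OF that False]] by (simp add: sph_alt)
    finally show ?thesis .
  qed
  have rle: "r x \<le> 1" "r x \<ge> 0" if "x \<in> disc n" for x
    using that ssum_nonneg[of n x] by (auto simp: r_def disc_alt)
  have g_disc: "g x \<in> disc m" if "x \<in> disc n" for x
  proof -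
    have "\<forall>i\<ge>m. g x i = 0"
      using hs[OF u_sph[OF that]] by (auto simp: g_def sph_alt)
    moreover have "ssum m (g x) \<le> 1" using ssum_g[OF that] rle[OF that]
      by (simp add: power_le_one)
    ultimately show ?thesis by (simp add: disc_alt)
  qed
  have surj: "\<exists>x\<in>disc n. g x = y" if "y \<in> disc m" for y
  proof (cases "ssum m y = 0")
    case True
    then have "y = (\<lambda>i. 0)" using that ssum_zero_imp[of m y] by (auto simp: disc_alt)
    moreover have "g (\<lambda>i. 0) = (\<lambda>i. 0)" by (simp add: g_def r_def ssum_def)
    ultimately show ?thesis using zero_in_disc by blast
  next
    case False
    define s where "s = sqrt (ssum m y)"
    have s0: "s > 0" using False ssum_nonneg[of m y] by (simp add: s_def)
    have "(\<lambda>i. y i / s) \<in> disc_boundary m"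
    proof -
      have "ssum m (\<lambda>i. (1/s) * y i) = (1/s)\<^sup>2 * ssum m y" by (rule ssum_scale)
      also have "\<dots> = 1" using s0 ssum_nonneg[of m y] by (simp add: s_def power_divide)
      finally show ?thesis using that by (auto simp: sph_alt disc_alt)
    qed
    then obtain x' where x': "x' \<in> disc_boundary n" "h x' = (\<lambda>i. y i / s)"
      using hi by (metis imageE)
    define x where "x = (\<lambda>i. s * x' i)"
    have sx: "ssum n x = s\<^sup>2" using ssum_scale[of n s x'] x'(1) by (simp add: x_def sph_alt)
    have rx: "r x = s" using sx s0 by (simp add: r_def)
    have "s \<le> 1" using that ssum_nonneg[of m y] by (simp add: s_def disc_alt)
    then have xd: "x \<in> disc n" using x'(1) sx s0 by (auto simp: disc_alt sph_alt x_def power_le_one)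
    have "u x = x'" using s0 rx by (auto simp: u_def x_def)
    then have "g x = y" using rx s0 x'(2) by (auto simp: g_def)
    then show ?thesis using xd by blast
  qed
  have gi: "g ` disc n = disc m" using g_disc surj by blast
  have gj: "inj_on g (disc n)"
  proof (rule inj_onI)
    fix x y assume xy: "x \<in> disc n" "y \<in> disc n" "g x = g y"
    have "(r x)\<^sup>2 = (r y)\<^sup>2" using ssum_g xy by metis
    then have rr: "r x = r y" using rle xy by (simp add: power2_eq_iff_nonneg)
    show "x = y"
    proof (cases "r x = 0")
      case True then show ?thesis using rr r0 xy by metis
    next
      case False
      then have "(\<lambda>i. r x * h (u x) i) = (\<lambda>i. r x * h (u y) i)"
        using xy(3) rr by (simp add: g_def)
      then have "h (u x) = h (u y)" using False
        by (metis (no_types, lifting) ext mult_cancel_left)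
      then have "u x = u y" using hj u_sph xy False rr by (metis inj_onD)
      then show ?thesis using ux False rr by metis
    qed
  qed
  have gh: "\<forall>x\<in>disc_boundary n. g x = h x"
  proof
    fix x assume x: "x \<in> disc_boundary n"
    then have "r x = 1" by (simp add: r_def sph_alt)
    then show "g x = h x" by (simp add: g_def u_def)
  qed
  have gc: "continuous_on (disc n) g"
  proof (rule continuous_on_coordinatewise_then_product)
    fix i
    show "continuous_on (disc n) (\<lambda>x. g x i)"
      unfolding continuous_on_eq_continuous_within
    proof
      fix x assume x: "x \<in> disc n"
      have rc: "continuous_on UNIV r" unfolding r_def by (intro continuous_intros)
      show "continuous (at x within disc n) (\<lambda>x. g x i)"
      proof (cases "r x = 0")
        case True
        then have gx: "g x i = 0" by (simp add: g_def)
        have "((\<lambda>y. g y i) \<longlongrightarrow> 0) (at x within disc n)"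
        proof (rule Lim_null_comparison)
          have bnd: "norm (g y i) \<le> r y" if y: "y \<in> disc n" for y
          proof (cases "r y = 0")
            case False
            have "\<bar>h (u y) i\<bar> \<le> 1" using sph_coord_bound hs u_sph y False by blast
            then have "\<bar>r y\<bar> * \<bar>h (u y) i\<bar> \<le> \<bar>r y\<bar>" by (simp add: mult_left_le)
            then show ?thesis using False rle[OF y] by (simp add: g_def abs_mult)
          qed (simp add: g_def)
          show "\<forall>\<^sub>F y in at x within disc n. norm (g y i) \<le> r y"
            unfolding eventually_at_filter by (intro always_eventually) (use bnd in force)
          have "(r \<longlongrightarrow> r x) (at x within disc n)"
            using rc by (meson UNIV_I continuous_on_def tendsto_within_subset subset_UNIV)
          then show "(r \<longlongrightarrow> 0) (at x within disc n)" using True by simp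
        qed
        then show ?thesis using gx by (simp add: continuous_within)
      next
        case False
        define Ov where "Ov = r -` (- {0})"
        have oO: "open Ov" unfolding Ov_def
          using rc by (metis open_vimage closed_singleton open_Compl)
        have xO: "x \<in> Ov" using False by (simp add: Ov_def)
        have "continuous_on (disc n \<inter> Ov) (\<lambda>y. r y * h (u y) i)"
        proof (intro continuous_intros)
          show "continuous_on (disc n \<inter> Ov) r" using rc continuous_on_subset by blast
          have uc: "continuous_on (disc n \<inter> Ov) u"
            unfolding u_def
            by (intro continuous_intros coord_cont continuous_on_subset[OF rc]) (auto simp: Ov_def)
          have "continuous_on (disc n \<inter> Ov) (h \<circ> u)"
            by (rule continuous_on_compose[OF uc continuous_on_subset[OF hc]])
              (use u_sph in \<open>auto simp: Ov_def\<close>)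
          then have "continuous_on (disc n \<inter> Ov) (\<lambda>y. (h \<circ> u) y i)"
            by (rule continuous_on_product_then_coordinatewise)
          then show "continuous_on (disc n \<inter> Ov) (\<lambda>y. h (u y) i)" by simp
        qed
        then have "continuous_on (disc n \<inter> Ov) (\<lambda>y. g y i)"
          by (rule continuous_on_eq) (auto simp: g_def Ov_def)
        then have "continuous (at x within disc n \<inter> Ov) (\<lambda>y. g y i)"
          using x xO by (simp add: continuous_on_eq_continuous_within)
        moreover have "at x within disc n \<inter> Ov = at x within disc n"
          by (rule at_within_nhd[OF xO oO]) auto
        ultimately show ?thesis by simp
      qed
    qed
  qed
  have gE: "g ` (disc n \<inter> Ek k) = disc m \<inter> Ek k"
    if hE: "h ` (disc_boundary n \<inter> Ek k) = disc_boundary m \<inter> Ek k" for k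
  proof -
    have hEiff: "h s \<in> Ek k \<longleftrightarrow> s \<in> Ek k" if "s \<in> disc_boundary n" for s
    proof
      assume "h s \<in> Ek k"
      then have "h s \<in> h ` (disc_boundary n \<inter> Ek k)" using hE hs[OF that] by blast
      then obtain s' where "s' \<in> disc_boundary n \<inter> Ek k" "h s = h s'" by blast
      then show "s \<in> Ek k" using hj that by (metis IntD1 IntD2 inj_onD)
    next
      assume "s \<in> Ek k" then show "h s \<in> Ek k" using hE that by blast
    qed
    have geiff: "g x \<in> Ek k \<longleftrightarrow> x \<in> Ek k" if x: "x \<in> disc n" for x
    proof (cases "r x = 0")
      case True
      then show ?thesis using r0[OF x] by (simp add: g_def Ek_def)
    next
      case False
      have "g x \<in> Ek k \<longleftrightarrow> h (u x) \<in> Ek k" using False by (simp add: g_def Ek_def)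
      also have "\<dots> \<longleftrightarrow> u x \<in> Ek k" using hEiff u_sph x False by blast
      also have "\<dots> \<longleftrightarrow> x \<in> Ek k" using False by (simp add: u_def Ek_def)
      finally show ?thesis .
    qed
    show ?thesis
    proof
      show "g ` (disc n \<inter> Ek k) \<subseteq> disc m \<inter> Ek k" using g_disc geiff by blast
      show "disc m \<inter> Ek k \<subseteq> g ` (disc n \<inter> Ek k)"
      proof
        fix y assume y: "y \<in> disc m \<inter> Ek k"
        then obtain x where "x \<in> disc n" "g x = y" using surj by blast
        then show "y \<in> g ` (disc n \<inter> Ek k)" using geiff y by blast
      qed
    qed
  qed
  show thesis using that[OF gc gi gj gh gE] .
qed


definition Esp :: "nat \<Rightarrow> (nat \<Rightarrow> real) set" where
  "Esp n = {x. \<forall>i\<ge>n. x i = 0}"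

lemma Euclidean_space_top: "Euclidean_space n = top_of_set (Esp n)"
  by (simp add: Euclidean_space_def euclidean_product_topology Esp_def)

lemma disc_sub: "disc n \<subseteq> Esp n"
  by (auto simp: disc_alt Esp_def)

lemma subtop_disc: "subtopology (Euclidean_space n) (disc n) = top_of_set (disc n)"
  using disc_sub by (simp add: Euclidean_space_top subtopology_subtopology inf.absorb2)

lemma escape:
  fixes c :: "real \<Rightarrow> (nat \<Rightarrow> real)"
  assumes "open W" "p \<in> W" "continuous_on UNIV c" "c 0 = p"
  shows "\<exists>t>0. c t \<in> W"
proof -
  have "open (c -` W)" using assms(1,3) by (simp add: open_vimage)
  moreover have "0 \<in> c -` W" using assms by simp
  ultimately obtain e where e: "e > 0" "ball 0 e \<subseteq> c -` W"
    by (meson open_contains_ball_eq)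
  have "e/2 \<in> ball 0 e" using e by (simp add: dist_real_def)
  then have "e/2 \<in> c -` W" using e by blast
  then show ?thesis using e by (intro exI[of _ "e/2"]) auto
qed

lemma int_open: "openin (Euclidean_space m) (disc m - disc_boundary m)"
proof -
  have "disc m - disc_boundary m = Esp m \<inter> (ssum m -` {..<1})"
    by (auto simp: disc_alt sph_alt Esp_def)
  moreover have "open (ssum m -` {..<1})"
    by (rule open_vimage) (auto intro: continuous_intros ssum_cont)
  ultimately show ?thesis by (simp add: Euclidean_space_top openin_open_Int)
qed

lemma L1:
  assumes hm: "homeomorphic_maps (top_of_set (disc n)) (top_of_set (disc m)) f g"
    and nm: "n \<le> m"
  shows "n = m \<and> g ` (disc m - disc_boundary m) \<subseteq> disc n - disc_boundary n"
proof -
  let ?U = "disc m - disc_boundary m"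
  have gc: "continuous_on (disc m) g" and gd: "g ` disc m \<subseteq> disc n"
    and fg: "\<forall>y\<in>disc m. f (g y) = y"
    using hm by (auto simp: homeomorphic_maps_def continuous_map_iff_continuous)
  have EnEm: "Esp n \<subseteq> Esp m" using nm by (auto simp: Esp_def)
  have cm: "continuous_map (subtopology (Euclidean_space m) ?U) (Euclidean_space m) g"
  proof -
    have "subtopology (Euclidean_space m) ?U = top_of_set ?U"
      using disc_sub[of m] by (auto simp: Euclidean_space_top subtopology_subtopology intro: arg_cong[where f="top_of_set"])
    moreover have "continuous_on ?U g" using gc continuous_on_subset by blast
    moreover have "g ` ?U \<subseteq> Esp m" using gd disc_sub[of n] EnEm by blast
    ultimately show ?thesis
      by (simp add: Euclidean_space_top continuous_map_in_subtopology continuous_map_iff_continuous image_subset_iff_funcset)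
  qed
  have inj: "inj_on g ?U" using fg by (metis Diff_subset inj_on_def subsetD)
  have "openin (Euclidean_space m) (g ` ?U)"
    by (rule invariance_of_domain_Euclidean_space[OF int_open cm inj])
  then obtain W where W: "open W" "g ` ?U = W \<inter> Esp m"
    by (auto simp: Euclidean_space_top openin_subtopology openin_open)
  have z: "(\<lambda>i. 0) \<in> ?U" by (simp add: disc_alt sph_alt ssum_def)
  have nm_eq: "n = m"
  proof (rule ccontr)
    assume "n \<noteq> m"
    then have nlm: "n < m" using nm by simp
    define p where "p = g (\<lambda>i. 0)"
    have pW: "p \<in> W" and pE: "p \<in> Esp n" using W z gd disc_sub[of n] unfolding p_def by blast+
    define c where "c t = (\<lambda>i. if i = n then p i + t else p i)" for t :: real
    have "continuous_on UNIV c" unfolding c_def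
    proof (intro continuous_on_coordinatewise_then_product)
      fix i show "continuous_on UNIV (\<lambda>x. if i = n then p i + x else p i)"
        by (cases "i = n") (auto intro!: continuous_intros)
    qed
    moreover have "c 0 = p" by (auto simp: c_def)
    ultimately obtain t where t: "t > 0" "c t \<in> W" using escape[OF W(1) pW] by blast
    have "c t \<in> Esp m" using pE EnEm nlm by (auto simp: c_def Esp_def)
    then have "c t \<in> g ` ?U" using t W by blast
    then have "c t \<in> Esp n" using gd disc_sub[of n] by blast
    moreover have "c t n = p n + t" by (simp add: c_def)
    ultimately show False using pE t by (simp add: Esp_def)
  qed
  have "g y \<notin> disc_boundary n" if y: "y \<in> ?U" for y
  proof
    assume gs: "g y \<in> disc_boundary n"
    define p where "p = g y"
    have pW: "p \<in> W" using W y unfolding p_def by blast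
    define c where "c t = (\<lambda>i. (1 + t) * p i)" for t :: real
    have "continuous_on UNIV c" unfolding c_def
      by (intro continuous_on_coordinatewise_then_product continuous_intros)
    moreover have "c 0 = p" by (auto simp: c_def)
    ultimately obtain t where t: "t > 0" "c t \<in> W" using escape[OF W(1) pW] by blast
    have pE: "p \<in> Esp m" using gs nm_eq by (simp add: p_def sph_alt Esp_def)
    have "c t \<in> Esp m" using pE by (auto simp: c_def Esp_def)
    then have "c t \<in> g ` ?U" using t W by blast
    then have "c t \<in> disc n" using gd by blast
    then have "ssum n (c t) \<le> 1" by (simp add: disc_alt)
    moreover have "ssum n (c t) = (1 + t)\<^sup>2" using ssum_scale[of n "1+t" p] gs
      by (simp add: c_def p_def sph_alt)
    moreover have "(1 + t)\<^sup>2 > (1::real)" using one_less_power[of "1+t" 2] t by simp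
    ultimately show False by simp
  qed
  then show ?thesis using nm_eq gd by blast
qed

lemma disc_homeo_boundary:
  assumes "homeomorphic_map (top_of_set (disc n)) (top_of_set (disc m)) f"
  shows "n = m \<and> f ` disc_boundary n = disc_boundary m"
proof -
  obtain g where hm: "homeomorphic_maps (top_of_set (disc n)) (top_of_set (disc m)) f g"
    using assms homeomorphic_map_maps by blast
  have hm': "homeomorphic_maps (top_of_set (disc m)) (top_of_set (disc n)) g f"
    using hm homeomorphic_maps_sym by blast
  have A: "n = m \<and> g ` (disc m - disc_boundary m) \<subseteq> disc n - disc_boundary n
        \<and> f ` (disc n - disc_boundary n) \<subseteq> disc m - disc_boundary m"
  proof (cases "n \<le> m")
    case True
    then have 1: "n = m \<and> g ` (disc m - disc_boundary m) \<subseteq> disc n - disc_boundary n"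
      using L1[OF hm] by blast
    then have "m \<le> n" by simp
    then show ?thesis using 1 L1[OF hm'] by blast
  next
    case False
    then have 1: "m = n \<and> f ` (disc n - disc_boundary n) \<subseteq> disc m - disc_boundary m"
      using L1[OF hm'] by simp
    then have "n \<le> m" by simp
    then show ?thesis using 1 L1[OF hm] by blast
  qed
  have fd: "f ` disc n \<subseteq> disc m" and gd: "g ` disc m \<subseteq> disc n"
    and gf: "\<forall>x\<in>disc n. g (f x) = x" and fg: "\<forall>y\<in>disc m. f (g y) = y"
    using hm by (auto simp: homeomorphic_maps_def continuous_map_def)
  have sd: "disc_boundary k \<subseteq> disc k" for k by (auto simp: disc_alt sph_alt)
  have "f ` disc_boundary n \<subseteq> disc_boundary m"
  proof
    fix y assume "y \<in> f ` disc_boundary n"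
    then obtain x where x: "x \<in> disc_boundary n" "y = f x" by blast
    show "y \<in> disc_boundary m"
    proof (rule ccontr)
      assume "y \<notin> disc_boundary m"
      then have "y \<in> disc m - disc_boundary m" using x fd sd by blast
      then have "g y \<in> disc n - disc_boundary n" using A by blast
      then show False using x gf sd[of n] by force
    qed
  qed
  moreover have "disc_boundary m \<subseteq> f ` disc_boundary n"
  proof
    fix y assume y: "y \<in> disc_boundary m"
    have "g y \<in> disc_boundary n"
    proof (rule ccontr)
      assume "g y \<notin> disc_boundary n"
      then have "g y \<in> disc n - disc_boundary n" using y gd sd by blast
      then have "f (g y) \<in> disc m - disc_boundary m" using A by blast
      then show False using y fg sd[of m] by force
    qed
    then show "y \<in> f ` disc_boundary n" using fg y sd by (metis image_eqI subsetD)
  qed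
  ultimately show ?thesis using A by blast
qed

lemma cell_param_top: "cell_param X n \<sigma> \<alpha> \<longleftrightarrow> \<sigma> \<subseteq> topspace X \<and>
     homeomorphic_map (top_of_set (disc n)) (subtopology X \<sigma>) \<alpha>"
  by (simp add: cell_param_def subtop_disc)

lemma cell_param_boundary:
  assumes "cell_param X n \<sigma> \<alpha>" "cell_param X m \<sigma> \<beta>"
  shows "n = m \<and> \<alpha> ` disc_boundary n = \<beta> ` disc_boundary m"
proof -
  have ha: "homeomorphic_map (top_of_set (disc n)) (subtopology X \<sigma>) \<alpha>"
    and hb: "homeomorphic_map (top_of_set (disc m)) (subtopology X \<sigma>) \<beta>"
    and s: "\<sigma> \<subseteq> topspace X"
    using assms by (auto simp: cell_param_top)
  obtain \<beta>' where hb': "homeomorphic_maps (top_of_set (disc m)) (subtopology X \<sigma>) \<beta> \<beta>'"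
    using hb homeomorphic_map_maps by blast
  then have "homeomorphic_map (subtopology X \<sigma>) (top_of_set (disc m)) \<beta>'"
    by (simp add: homeomorphic_maps_map)
  then have "homeomorphic_map (top_of_set (disc n)) (top_of_set (disc m)) (\<beta>' \<circ> \<alpha>)"
    using ha homeomorphic_map_compose by blast
  then have D: "n = m \<and> (\<beta>' \<circ> \<alpha>) ` disc_boundary n = disc_boundary m"
    by (rule disc_homeo_boundary)
  have ad: "\<alpha> ` disc n = \<sigma>" using homeomorphic_imp_surjective_map[OF ha] s
    by (simp add: inf.absorb2)
  have bb: "\<forall>z\<in>\<sigma>. \<beta> (\<beta>' z) = z" using hb' s by (simp add: homeomorphic_maps_def inf.absorb2)
  have sd: "disc_boundary n \<subseteq> disc n" by (auto simp: disc_alt sph_alt)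
  have "\<beta> ` disc_boundary m = \<beta> ` (\<beta>' \<circ> \<alpha>) ` disc_boundary n" using D by metis
  also have "\<dots> = (\<lambda>z. \<beta> (\<beta>' (\<alpha> z))) ` disc_boundary n" by (simp add: image_comp comp_def)
  also have "\<dots> = \<alpha> ` disc_boundary n"
    using bb ad sd by (intro image_cong) auto
  finally show ?thesis using D by simp
qed


lemma disc_closed: "closed (disc n)"
proof -
  have "disc n = Esp n \<inter> (ssum n -` {..1})" by (auto simp: disc_alt Esp_def)
  moreover have "closed (Esp n)"
    using closedin_Euclidean_space[of n]
    by (simp add: euclidean_product_topology topspace_Euclidean_space Esp_def)
  moreover have "closed (ssum n -` {..1})"
    by (rule closed_vimage) (auto intro: ssum_cont)
  ultimately show ?thesis by (simp add: closed_Int)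
qed

lemma disc_compact: "compact (disc n)"
proof -
  have "compactin (powertop_real UNIV) (UNIV \<rightarrow>\<^sub>E {-1..1})"
    by (simp add: compactin_PiE)
  moreover have "disc n \<subseteq> UNIV \<rightarrow>\<^sub>E {-1..1}"
  proof
    fix x assume x: "x \<in> disc n"
    have "\<bar>x i\<bar> \<le> 1" for i
    proof (cases "i < n")
      case True
      have "(x i)\<^sup>2 \<le> ssum n x" unfolding ssum_def
        using True by (intro member_le_sum) auto
      then have "(x i)\<^sup>2 \<le> 1" using x by (simp add: disc_alt)
      then show ?thesis by (metis abs_le_square_iff abs_one one_power2)
    next
      case False then show ?thesis using x by (simp add: disc_alt)
    qed
    then show "x \<in> UNIV \<rightarrow>\<^sub>E {-1..1}" by (auto simp: abs_le_iff)
  qed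
  moreover have "closedin (powertop_real UNIV) (disc n)"
    using disc_closed by (simp add: euclidean_product_topology)
  ultimately have "compactin (powertop_real UNIV) (disc n)" by (rule closed_compactin)
  then show ?thesis by (simp add: euclidean_product_topology)
qed

lemma sph_sub: "disc_boundary n \<subseteq> disc n" by (auto simp: disc_alt sph_alt)

lemma cell_param_facts:
  assumes "cell_param X n \<sigma> \<alpha>"
  shows "\<sigma> \<subseteq> topspace X" "\<alpha> ` disc n = \<sigma>" "inj_on \<alpha> (disc n)"
    "continuous_map (top_of_set (disc n)) X \<alpha>" "compactin X \<sigma>"
proof -
  have h: "homeomorphic_map (top_of_set (disc n)) (subtopology X \<sigma>) \<alpha>" and s: "\<sigma> \<subseteq> topspace X"
    using assms by (auto simp: cell_param_top)
  show "\<sigma> \<subseteq> topspace X" by (fact s)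
  show ai: "\<alpha> ` disc n = \<sigma>" using homeomorphic_imp_surjective_map[OF h] s by (simp add: inf.absorb2)
  show "inj_on \<alpha> (disc n)" using homeomorphic_imp_injective_map[OF h] by simp
  have "continuous_map (top_of_set (disc n)) (subtopology X \<sigma>) \<alpha>"
    by (rule homeomorphic_imp_continuous_map[OF h])
  then show c: "continuous_map (top_of_set (disc n)) X \<alpha>"
    by (simp add: continuous_map_in_subtopology)
  have "compactin (top_of_set (disc n)) (disc n)"
    using disc_compact by (simp add: compactin_subtopology)
  then show "compactin X \<sigma>" using image_compactin[OF _ c] ai by metis
qed

lemma cell_boundary_param:
  assumes "cell_param X n \<sigma> \<alpha>"
  shows "cell_boundary X \<sigma> = \<alpha> ` disc_boundary n"
proof -
  have "\<exists>B. \<exists>n \<alpha>. cell_param X n \<sigma> \<alpha> \<and> B = \<alpha> ` disc_boundary n" using assms by blast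
  then have "\<exists>m \<beta>. cell_param X m \<sigma> \<beta> \<and> cell_boundary X \<sigma> = \<beta> ` disc_boundary m"
    unfolding cell_boundary_def by (rule someI_ex)
  then obtain m \<beta> where "cell_param X m \<sigma> \<beta>" "cell_boundary X \<sigma> = \<beta> ` disc_boundary m" by blast
  then show ?thesis using cell_param_boundary[OF assms] by metis
qed

lemma is_cell_param: "is_cell X n \<sigma> \<Longrightarrow> \<exists>\<alpha>. cell_param X n \<sigma> \<alpha>"
  by (simp add: is_cell_def)

lemma cell_boundary_sub:
  assumes "is_cell X n \<sigma>" shows "cell_boundary X \<sigma> \<subseteq> \<sigma>"
proof -
  obtain \<alpha> where a: "cell_param X n \<sigma> \<alpha>" using assms is_cell_param by blast
  show ?thesis using cell_boundary_param[OF a] cell_param_facts(2)[OF a] sph_sub by blast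
qed


lemma psub_induct:
  assumes fin: "finite \<X>" and step: "\<And>\<sigma>. \<sigma> \<in> \<X> \<Longrightarrow> (\<And>\<tau>. \<tau> \<in> \<X> \<Longrightarrow> \<tau> \<subset> \<sigma> \<Longrightarrow> P \<tau>) \<Longrightarrow> P \<sigma>"
  shows "\<sigma> \<in> \<X> \<Longrightarrow> P \<sigma>"
proof (induction "card {\<tau>\<in>\<X>. \<tau> \<subset> \<sigma>}" arbitrary: \<sigma> rule: less_induct)
  case less
  show ?case
  proof (rule step[OF less.prems])
    fix \<tau> assume t: "\<tau> \<in> \<X>" "\<tau> \<subset> \<sigma>"
    have "{\<rho>\<in>\<X>. \<rho> \<subset> \<tau>} \<subset> {\<rho>\<in>\<X>. \<rho> \<subset> \<sigma>}" using t by auto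
    then have "card {\<rho>\<in>\<X>. \<rho> \<subset> \<tau>} < card {\<rho>\<in>\<X>. \<rho> \<subset> \<sigma>}"
      using fin by (intro psubset_card_mono) auto
    then show "P \<tau>" using less.hyps t by blast
  qed
qed

context
  fixes X :: "'a topology" and \<X> :: "'a set set"
  assumes CW: "finite_regular_CW X \<X>"
begin

lemma CW_fin: "finite \<X>" using CW by (simp add: finite_regular_CW_def)
lemma CW_cell: "\<sigma> \<in> \<X> \<Longrightarrow> \<exists>n. is_cell X n \<sigma>" using CW by (simp add: finite_regular_CW_def)
lemma CW_cover: "(\<Union>\<sigma>\<in>\<X>. cell_interior X \<sigma>) = topspace X" using CW by (simp add: finite_regular_CW_def)
lemma CW_disj: "\<sigma> \<in> \<X> \<Longrightarrow> \<tau> \<in> \<X> \<Longrightarrow> \<sigma> \<noteq> \<tau> \<Longrightarrow> cell_interior X \<sigma> \<inter> cell_interior X \<tau> = {}"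
  using CW by (simp add: finite_regular_CW_def)
lemma CW_bd: "\<sigma> \<in> \<X> \<Longrightarrow> \<exists>\<C>\<subseteq>\<X>. (\<forall>\<tau>\<in>\<C>. cell_dim X \<tau> < cell_dim X \<sigma>) \<and> cell_boundary X \<sigma> = \<Union>\<C>"
  using CW by (simp add: finite_regular_CW_def)
lemma CW_haus: "Hausdorff_space X" using CW by (simp add: finite_regular_CW_def)

lemma CW_bd_sub: "\<sigma> \<in> \<X> \<Longrightarrow> cell_boundary X \<sigma> \<subseteq> \<sigma>"
  using CW_cell cell_boundary_sub by blast

lemma CW_int_sub: "cell_interior X \<sigma> \<subseteq> \<sigma>" by (auto simp: cell_interior_def)

lemma CW_top: "\<sigma> \<in> \<X> \<Longrightarrow> \<sigma> \<subseteq> topspace X"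
  using CW_cell is_cell_param cell_param_facts(1) by metis

lemma CW_compact: "\<sigma> \<in> \<X> \<Longrightarrow> compactin X \<sigma>"
  using CW_cell is_cell_param cell_param_facts(5) by metis

lemma CW_closed: "\<sigma> \<in> \<X> \<Longrightarrow> closedin X \<sigma>"
  using CW_compact CW_haus compactin_imp_closedin by blast

lemma CW_union: "\<Union>\<X> = topspace X"
proof
  show "\<Union>\<X> \<subseteq> topspace X" using CW_top by blast
  show "topspace X \<subseteq> \<Union>\<X>"
  proof
    fix x assume "x \<in> topspace X"
    then obtain \<rho> where "\<rho> \<in> \<X>" "x \<in> cell_interior X \<rho>" using CW_cover by blast
    then show "x \<in> \<Union>\<X>" using CW_int_sub by blast
  qed
qed

lemma CW_meet_all:
  assumes "\<sigma> \<in> \<X>" shows "\<forall>\<rho>\<in>\<X>. cell_interior X \<rho> \<inter> \<sigma> \<noteq> {} \<longrightarrow> \<rho> \<subseteq> \<sigma>"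
proof (rule psub_induct[OF CW_fin, where P="\<lambda>\<sigma>. \<forall>\<rho>\<in>\<X>. cell_interior X \<rho> \<inter> \<sigma> \<noteq> {} \<longrightarrow> \<rho> \<subseteq> \<sigma>", OF _ assms])
  fix \<sigma> assume s: "\<sigma> \<in> \<X>"
    and IH: "\<And>\<tau>. \<tau> \<in> \<X> \<Longrightarrow> \<tau> \<subset> \<sigma> \<Longrightarrow> \<forall>\<rho>\<in>\<X>. cell_interior X \<rho> \<inter> \<tau> \<noteq> {} \<longrightarrow> \<rho> \<subseteq> \<tau>"
  show "\<forall>\<rho>\<in>\<X>. cell_interior X \<rho> \<inter> \<sigma> \<noteq> {} \<longrightarrow> \<rho> \<subseteq> \<sigma>"
  proof (intro ballI impI)
    fix \<rho> assume r: "\<rho> \<in> \<X>" "cell_interior X \<rho> \<inter> \<sigma> \<noteq> {}"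
    then obtain x where x: "x \<in> cell_interior X \<rho>" "x \<in> \<sigma>" by blast
    show "\<rho> \<subseteq> \<sigma>"
    proof (cases "x \<in> cell_interior X \<sigma>")
      case True
      then have "cell_interior X \<rho> \<inter> cell_interior X \<sigma> \<noteq> {}" using x by blast
      then have "\<rho> = \<sigma>" using CW_disj[OF r(1) s] by blast
      then show ?thesis by simp
    next
      case False
      then have xb: "x \<in> cell_boundary X \<sigma>" using x by (simp add: cell_interior_def)
      obtain \<C> where C: "\<C> \<subseteq> \<X>" "\<forall>\<tau>\<in>\<C>. cell_dim X \<tau> < cell_dim X \<sigma>" "cell_boundary X \<sigma> = \<Union>\<C>"
        using CW_bd[OF s] by blast
      obtain \<tau> where t: "\<tau> \<in> \<C>" "x \<in> \<tau>" using xb C(3) by blast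
      have tX: "\<tau> \<in> \<X>" using C(1) t(1) by blast
      have "\<tau> \<noteq> \<sigma>" using C(2) t(1) by auto
      moreover have "\<tau> \<subseteq> \<sigma>" using C(3) t(1) CW_bd_sub[OF s] by blast
      ultimately have ts: "\<tau> \<subset> \<sigma>" by blast
      have "cell_interior X \<rho> \<inter> \<tau> \<noteq> {}" using x t by blast
      then have "\<rho> \<subseteq> \<tau>" using IH[OF tX ts] r(1) by blast
      then show ?thesis using ts by blast
    qed
  qed
qed

lemma CW_meet: "\<sigma> \<in> \<X> \<Longrightarrow> \<rho> \<in> \<X> \<Longrightarrow> cell_interior X \<rho> \<inter> \<sigma> \<noteq> {} \<Longrightarrow> \<rho> \<subseteq> \<sigma>"
  using CW_meet_all by blast

lemma CW_in_int: "x \<in> topspace X \<Longrightarrow> \<exists>\<rho>\<in>\<X>. x \<in> cell_interior X \<rho>"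
  using CW_cover by blast

lemma CW_bd_char:
  assumes s: "\<sigma> \<in> \<X>"
  shows "cell_boundary X \<sigma> = \<Union>{\<tau>\<in>\<X>. \<tau> \<subset> \<sigma>}"
proof (rule equalityI)
  obtain \<C> where C: "\<C> \<subseteq> \<X>" "\<forall>\<tau>\<in>\<C>. cell_dim X \<tau> < cell_dim X \<sigma>" "cell_boundary X \<sigma> = \<Union>\<C>"
    using CW_bd[OF s] by blast
  show "cell_boundary X \<sigma> \<subseteq> \<Union>{\<tau>\<in>\<X>. \<tau> \<subset> \<sigma>}"
  proof
    fix y assume "y \<in> cell_boundary X \<sigma>"
    then obtain \<tau> where t: "\<tau> \<in> \<C>" "y \<in> \<tau>" using C(3) by blast
    have "\<tau> \<noteq> \<sigma>" using C(2) t(1) by auto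
    moreover have "\<tau> \<subseteq> \<sigma>" using C(3) t(1) CW_bd_sub[OF s] by blast
    ultimately have "\<tau> \<subset> \<sigma>" by blast
    then show "y \<in> \<Union>{\<tau>\<in>\<X>. \<tau> \<subset> \<sigma>}" using t C(1) by blast
  qed
  show "\<Union>{\<tau>\<in>\<X>. \<tau> \<subset> \<sigma>} \<subseteq> cell_boundary X \<sigma>"
  proof
    fix y assume "y \<in> \<Union>{\<tau>\<in>\<X>. \<tau> \<subset> \<sigma>}"
    then obtain \<tau> where t: "\<tau> \<in> \<X>" "\<tau> \<subset> \<sigma>" "y \<in> \<tau>" by blast
    have "y \<in> topspace X" using CW_top[OF t(1)] t(3) by blast
    then obtain \<rho> where r: "\<rho> \<in> \<X>" "y \<in> cell_interior X \<rho>" using CW_in_int by blast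
    have "cell_interior X \<rho> \<inter> \<tau> \<noteq> {}" using r(2) t(3) by blast
    then have "\<rho> \<subseteq> \<tau>" using CW_meet[OF t(1) r(1)] by blast
    then have "\<rho> \<noteq> \<sigma>" using t(2) by blast
    then have "cell_interior X \<rho> \<inter> cell_interior X \<sigma> = {}" using CW_disj[OF r(1) s] by blast
    then have "y \<notin> cell_interior X \<sigma>" using r(2) by blast
    moreover have "y \<in> \<sigma>" using t by blast
    ultimately show "y \<in> cell_boundary X \<sigma>" by (simp add: cell_interior_def)
  qed
qed

end

lemma cont_union:
  assumes fin: "finite I" and clo: "\<And>T. T \<in> I \<Longrightarrow> closedin X T"
    and cont: "\<And>T. T \<in> I \<Longrightarrow> continuous_map (subtopology X T) Y f"
  shows "continuous_map (subtopology X (\<Union>I)) Y f"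
proof (rule pasting_lemma_closed[where I=I and T="\<lambda>T. T" and f="\<lambda>_. f"])
  show "finite I" by (fact fin)
  fix T assume T: "T \<in> I"
  show "closedin (subtopology X (\<Union>I)) T"
    using clo[OF T] T by (metis Sup_upper closedin_subset_topspace)
  show "continuous_map (subtopology (subtopology X (\<Union>I)) T) Y f"
    using cont[OF T] T by (simp add: subtopology_subtopology Int_absorb1 Sup_upper)
next
  fix x assume "x \<in> topspace (subtopology X (\<Union>I))"
  then show "\<exists>j. j \<in> I \<and> x \<in> j \<and> f x = f x" by auto
qed auto


definition good1 :: "'a topology \<Rightarrow> 'b topology \<Rightarrow> 'a set \<Rightarrow> 'b set \<Rightarrow> ('a set \<Rightarrow> 'b set)
   \<Rightarrow> 'a set \<Rightarrow> ('a \<Rightarrow> 'b) \<Rightarrow> bool" where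
  "good1 X X' Y Y' \<phi> \<sigma> \<Phi> \<longleftrightarrow> \<Phi> ` \<sigma> = \<phi> \<sigma> \<and> inj_on \<Phi> \<sigma> \<and> continuous_map (subtopology X \<sigma>) X' \<Phi> \<and>
     \<Phi> ` (\<sigma> \<inter> Y) = \<phi> \<sigma> \<inter> Y' \<and> \<Phi> ` cell_interior X \<sigma> = cell_interior X' (\<phi> \<sigma>)"

lemma good1_cong:
  assumes "good1 X X' Y Y' \<phi> \<sigma> \<Phi>" "\<And>x. x \<in> \<sigma> \<Longrightarrow> \<Phi> x = \<Psi> x"
  shows "good1 X X' Y Y' \<phi> \<sigma> \<Psi>"
proof -
  have i: "cell_interior X \<sigma> \<subseteq> \<sigma>" by (auto simp: cell_interior_def)
  have "\<Psi> ` \<sigma> = \<Phi> ` \<sigma>" using assms(2) by (intro image_cong) auto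
  moreover have "\<Psi> ` (\<sigma> \<inter> Y) = \<Phi> ` (\<sigma> \<inter> Y)" using assms(2) by (intro image_cong) auto
  moreover have "\<Psi> ` cell_interior X \<sigma> = \<Phi> ` cell_interior X \<sigma>"
    using assms(2) i by (intro image_cong) auto
  moreover have "inj_on \<Psi> \<sigma>" using assms inj_on_cong unfolding good1_def by metis
  moreover have "continuous_map (subtopology X \<sigma>) X' \<Psi>"
    using assms(1) unfolding good1_def
    by (metis (no_types, lifting) IntD2 assms(2) continuous_map_eq topspace_subtopology)
  ultimately show ?thesis using assms(1) unfolding good1_def by simp
qed

lemma param_inv:
  assumes a: "cell_param X n \<sigma> \<alpha>"
  obtains ai where "\<And>x. x \<in> disc n \<Longrightarrow> ai (\<alpha> x) = x" "\<And>y. y \<in> \<sigma> \<Longrightarrow> \<alpha> (ai y) = y"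
    "\<And>y. y \<in> \<sigma> \<Longrightarrow> ai y \<in> disc n"
    "continuous_map (subtopology X \<sigma>) (top_of_set (disc n)) ai"
proof -
  have h: "homeomorphic_map (top_of_set (disc n)) (subtopology X \<sigma>) \<alpha>" and s: "\<sigma> \<subseteq> topspace X"
    using a by (auto simp: cell_param_top)
  obtain ai where hm: "homeomorphic_maps (top_of_set (disc n)) (subtopology X \<sigma>) \<alpha> ai"
    using h homeomorphic_map_maps by blast
  have ts: "topspace (subtopology X \<sigma>) = \<sigma>" using s by (simp add: inf.absorb2)
  have c: "continuous_map (subtopology X \<sigma>) (top_of_set (disc n)) ai"
    using hm by (simp add: homeomorphic_maps_def)
  show ?thesis
  proof (rule that)
    show "\<And>x. x \<in> disc n \<Longrightarrow> ai (\<alpha> x) = x" using hm by (simp add: homeomorphic_maps_def)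
    show "\<And>y. y \<in> \<sigma> \<Longrightarrow> \<alpha> (ai y) = y" using hm ts by (simp add: homeomorphic_maps_def)
    show "\<And>y. y \<in> \<sigma> \<Longrightarrow> ai y \<in> disc n" using continuous_map_image_subset_topspace[OF c] ts by auto
  qed (fact c)
qed


context
  fixes X :: "'a topology" and X' :: "'b topology"
    and \<X> :: "'a set set" and \<X>' :: "'b set set"
    and Y :: "'a set" and Y' :: "'b set" and k :: nat
    and \<phi> :: "'a set \<Rightarrow> 'b set"
  assumes A1: "finite_regular_CW_pair X \<X> Y k"
    and A2: "finite_regular_CW_pair X' \<X>' Y' k"
    and A3: "poset_iso \<phi> \<X> \<X>'"
    and A4: "\<phi> ` cells_meeting \<X> Y = cells_meeting \<X>' Y'"
begin

lemma CW1: "finite_regular_CW X \<X>" using A1 by (simp add: finite_regular_CW_pair_def)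
lemma CW2: "finite_regular_CW X' \<X>'" using A2 by (simp add: finite_regular_CW_pair_def)
lemma bij: "bij_betw \<phi> \<X> \<X>'" using A3 by (simp add: poset_iso_def)
lemma phi_in: "\<sigma> \<in> \<X> \<Longrightarrow> \<phi> \<sigma> \<in> \<X>'" using bij bij_betwE by blast
lemma phi_inj: "\<sigma> \<in> \<X> \<Longrightarrow> \<tau> \<in> \<X> \<Longrightarrow> \<phi> \<sigma> = \<phi> \<tau> \<Longrightarrow> \<sigma> = \<tau>"
  using bij by (metis bij_betw_def inj_onD)
lemma phi_surj: "\<tau>' \<in> \<X>' \<Longrightarrow> \<exists>\<tau>\<in>\<X>. \<tau>' = \<phi> \<tau>"
  using bij by (metis bij_betw_def imageE)
lemma phi_mono: "\<sigma> \<in> \<X> \<Longrightarrow> \<tau> \<in> \<X> \<Longrightarrow> \<sigma> \<subseteq> \<tau> \<longleftrightarrow> \<phi> \<sigma> \<subseteq> \<phi> \<tau>"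
  using A3 by (simp add: poset_iso_def)

lemma phi_below: "\<sigma> \<in> \<X> \<Longrightarrow> \<phi> ` {\<tau>\<in>\<X>. \<tau> \<subset> \<sigma>} = {\<tau>'\<in>\<X>'. \<tau>' \<subset> \<phi> \<sigma>}"
proof (rule equalityI)
  assume s: "\<sigma> \<in> \<X>"
  show "\<phi> ` {\<tau>\<in>\<X>. \<tau> \<subset> \<sigma>} \<subseteq> {\<tau>'\<in>\<X>'. \<tau>' \<subset> \<phi> \<sigma>}"
  proof
    fix y assume "y \<in> \<phi> ` {\<tau>\<in>\<X>. \<tau> \<subset> \<sigma>}"
    then obtain \<tau> where t: "\<tau> \<in> \<X>" "\<tau> \<subset> \<sigma>" "y = \<phi> \<tau>" by blast
    have "\<phi> \<tau> \<subseteq> \<phi> \<sigma>" using phi_mono[OF t(1) s] t(2) by blast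
    moreover have "\<phi> \<tau> \<noteq> \<phi> \<sigma>" using phi_inj[OF t(1) s] t(2) by blast
    ultimately show "y \<in> {\<tau>'\<in>\<X>'. \<tau>' \<subset> \<phi> \<sigma>}" using t phi_in by blast
  qed
  show "{\<tau>'\<in>\<X>'. \<tau>' \<subset> \<phi> \<sigma>} \<subseteq> \<phi> ` {\<tau>\<in>\<X>. \<tau> \<subset> \<sigma>}"
  proof
    fix y assume y: "y \<in> {\<tau>'\<in>\<X>'. \<tau>' \<subset> \<phi> \<sigma>}"
    then obtain \<tau> where t: "\<tau> \<in> \<X>" "y = \<phi> \<tau>" using phi_surj by blast
    have "\<tau> \<subseteq> \<sigma>" using phi_mono[OF t(1) s] y t(2) by blast
    moreover have "\<tau> \<noteq> \<sigma>" using y t(2) by blast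
    ultimately show "y \<in> \<phi> ` {\<tau>\<in>\<X>. \<tau> \<subset> \<sigma>}" using t by blast
  qed
qed

lemma meets_iff: "\<sigma> \<in> \<X> \<Longrightarrow> \<phi> \<sigma> \<inter> Y' = {} \<longleftrightarrow> \<sigma> \<inter> Y = {}"
proof -
  assume s: "\<sigma> \<in> \<X>"
  have "\<sigma> \<inter> Y \<noteq> {} \<longleftrightarrow> \<sigma> \<in> cells_meeting \<X> Y" using s by (simp add: cells_meeting_def)
  also have "\<dots> \<longleftrightarrow> \<phi> \<sigma> \<in> \<phi> ` cells_meeting \<X> Y"
  proof
    assume "\<phi> \<sigma> \<in> \<phi> ` cells_meeting \<X> Y"
    then obtain \<rho> where "\<rho> \<in> cells_meeting \<X> Y" "\<phi> \<sigma> = \<phi> \<rho>" by blast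
    then show "\<sigma> \<in> cells_meeting \<X> Y" using phi_inj[OF s] by (metis (no_types, lifting) cells_meeting_def mem_Collect_eq)
  qed blast
  also have "\<dots> \<longleftrightarrow> \<phi> \<sigma> \<inter> Y' \<noteq> {}" using A4 phi_in[OF s] by (simp add: cells_meeting_def)
  finally show ?thesis by blast
qed

abbreviation "good \<sigma> \<Phi> \<equiv> good1 X X' Y Y' \<phi> \<sigma> \<Phi>"

definition downclosed :: "'a set set \<Rightarrow> bool" where
  "downclosed S \<longleftrightarrow> S \<subseteq> \<X> \<and> (\<forall>\<sigma>\<in>S. \<forall>\<tau>\<in>\<X>. \<tau> \<subseteq> \<sigma> \<longrightarrow> \<tau> \<in> S)"

lemma inj_union:
  assumes D: "downclosed S" and G: "\<And>\<sigma>. \<sigma> \<in> S \<Longrightarrow> good \<sigma> \<Phi>"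
  shows "inj_on \<Phi> (\<Union>S)"
proof (rule inj_onI)
  fix x y assume x: "x \<in> \<Union>S" and y: "y \<in> \<Union>S" and e: "\<Phi> x = \<Phi> y"
  have SX: "S \<subseteq> \<X>" using D by (simp add: downclosed_def)
  have cellin: "\<exists>\<rho>\<in>S. z \<in> cell_interior X \<rho>" if z: "z \<in> \<Union>S" for z
  proof -
    obtain \<tau> where t: "\<tau> \<in> S" "z \<in> \<tau>" using z by blast
    have tX: "\<tau> \<in> \<X>" using SX t(1) by blast
    have "z \<in> topspace X" using CW_top[OF CW1 tX] t(2) by blast
    then obtain \<rho> where r: "\<rho> \<in> \<X>" "z \<in> cell_interior X \<rho>" using CW_in_int[OF CW1] by blast
    have "cell_interior X \<rho> \<inter> \<tau> \<noteq> {}" using r(2) t(2) by blast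
    then have "\<rho> \<subseteq> \<tau>" using CW_meet[OF CW1 tX r(1)] by blast
    then have "\<rho> \<in> S" using D t(1) r(1) by (simp add: downclosed_def)
    then show ?thesis using r(2) by blast
  qed
  obtain \<rho>1 where r1: "\<rho>1 \<in> S" "x \<in> cell_interior X \<rho>1" using cellin[OF x] by blast
  obtain \<rho>2 where r2: "\<rho>2 \<in> S" "y \<in> cell_interior X \<rho>2" using cellin[OF y] by blast
  have "\<Phi> x \<in> cell_interior X' (\<phi> \<rho>1)" using G[OF r1(1)] r1(2) unfolding good1_def by blast
  moreover have "\<Phi> y \<in> cell_interior X' (\<phi> \<rho>2)" using G[OF r2(1)] r2(2) unfolding good1_def by blast
  ultimately have "cell_interior X' (\<phi> \<rho>1) \<inter> cell_interior X' (\<phi> \<rho>2) \<noteq> {}" using e by auto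
  then have "\<phi> \<rho>1 = \<phi> \<rho>2" using CW_disj[OF CW2 phi_in phi_in] r1(1) r2(1) SX by blast
  then have "\<rho>1 = \<rho>2" using phi_inj r1(1) r2(1) SX by blast
  then have "x \<in> \<rho>1" "y \<in> \<rho>1" using r1 r2 CW_int_sub[OF CW1] by blast+
  moreover have "inj_on \<Phi> \<rho>1" using G[OF r1(1)] unfolding good1_def by blast
  ultimately show "x = y" using e inj_onD by metis
qed


lemma params:
  assumes s: "\<sigma> \<in> \<X>"
  obtains n \<alpha> n' \<alpha>' where "cell_param X n \<sigma> \<alpha>" "cell_param X' n' (\<phi> \<sigma>) \<alpha>'"
    "(\<sigma> \<inter> Y = {} \<and> \<phi> \<sigma> \<inter> Y' = {}) \<or>
     ({x \<in> disc n. \<alpha> x \<in> \<sigma> \<inter> Y} = disc n \<inter> Ek k \<and>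
      {x \<in> disc n'. \<alpha>' x \<in> \<phi> \<sigma> \<inter> Y'} = disc n' \<inter> Ek k)"
proof (cases "\<sigma> \<inter> Y = {}")
  case True
  then have e': "\<phi> \<sigma> \<inter> Y' = {}" using meets_iff[OF s] by blast
  obtain n \<alpha> where "cell_param X n \<sigma> \<alpha>" using CW_cell[OF CW1 s] is_cell_param by blast
  moreover obtain n' \<alpha>' where "cell_param X' n' (\<phi> \<sigma>) \<alpha>'"
    using CW_cell[OF CW2 phi_in[OF s]] is_cell_param by blast
  ultimately show ?thesis using that True e' by blast
next
  case False
  then have e': "\<phi> \<sigma> \<inter> Y' \<noteq> {}" using meets_iff[OF s] by blast
  have sp: "standard_pair X k (\<sigma> \<inter> Y) \<sigma>" using A1 s False unfolding finite_regular_CW_pair_def by blast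
  have sp': "standard_pair X' k (\<phi> \<sigma> \<inter> Y') (\<phi> \<sigma>)" using A2 phi_in[OF s] e' unfolding finite_regular_CW_pair_def by blast
  obtain n \<alpha> where a: "cell_param X n \<sigma> \<alpha>" "{x \<in> disc n. \<alpha> x \<in> \<sigma> \<inter> Y} = {x \<in> disc n. \<forall>i<k. x i = 0}"
    using sp unfolding standard_pair_def by blast
  obtain n' \<alpha>' where a': "cell_param X' n' (\<phi> \<sigma>) \<alpha>'" "{x \<in> disc n'. \<alpha>' x \<in> \<phi> \<sigma> \<inter> Y'} = {x \<in> disc n'. \<forall>i<k. x i = 0}"
    using sp' unfolding standard_pair_def by blast
  have "{x \<in> disc n. \<forall>i<k. x i = 0} = disc n \<inter> Ek k" "{x \<in> disc n'. \<forall>i<k. x i = 0} = disc n' \<inter> Ek k"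
    by (auto simp: Ek_def)
  then show ?thesis using that[OF a(1) a'(1)] a(2) a'(2) by simp
qed

lemma step:
  assumes s: "\<sigma> \<in> \<X>" and G: "\<And>\<tau>. \<tau> \<in> \<X> \<Longrightarrow> \<tau> \<subset> \<sigma> \<Longrightarrow> good \<tau> \<Phi>0"
  obtains \<Psi> where "good \<sigma> \<Psi>" "\<And>x. x \<in> cell_boundary X \<sigma> \<Longrightarrow> \<Psi> x = \<Phi>0 x"
proof -
  define B where "B = {\<tau>\<in>\<X>. \<tau> \<subset> \<sigma>}"
  define bd where "bd = cell_boundary X \<sigma>"
  define bd' where "bd' = cell_boundary X' (\<phi> \<sigma>)"
  have s': "\<phi> \<sigma> \<in> \<X>'" using phi_in[OF s] .
  have BX: "B \<subseteq> \<X>" by (auto simp: B_def)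
  have GB: "\<And>\<tau>. \<tau> \<in> B \<Longrightarrow> good \<tau> \<Phi>0" using G by (auto simp: B_def)
  have bdB: "bd = \<Union>B" using CW_bd_char[OF CW1 s] by (simp add: bd_def B_def)
  have bdB': "bd' = \<Union>(\<phi> ` B)" using CW_bd_char[OF CW2 s'] phi_below[OF s] by (simp add: bd'_def B_def)
  have img: "\<Phi>0 ` bd = bd'"
  proof -
    have "\<Phi>0 ` bd = (\<Union>\<tau>\<in>B. \<Phi>0 ` \<tau>)" using bdB by auto
    also have "\<dots> = (\<Union>\<tau>\<in>B. \<phi> \<tau>)" using GB unfolding good1_def by auto
    finally show ?thesis using bdB' by simp
  qed
  have imgY: "\<Phi>0 ` (bd \<inter> Y) = bd' \<inter> Y'"
  proof -
    have "bd \<inter> Y = (\<Union>\<tau>\<in>B. \<tau> \<inter> Y)" using bdB by auto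
    then have "\<Phi>0 ` (bd \<inter> Y) = (\<Union>\<tau>\<in>B. \<Phi>0 ` (\<tau> \<inter> Y))" by auto
    also have "\<dots> = (\<Union>\<tau>\<in>B. \<phi> \<tau> \<inter> Y')" using GB unfolding good1_def by auto
    finally show ?thesis using bdB' by auto
  qed
  have Bdown: "downclosed B"
    unfolding downclosed_def B_def by auto
  have inj0: "inj_on \<Phi>0 bd" using inj_union[OF Bdown GB] bdB by simp
  have cont0: "continuous_map (subtopology X bd) X' \<Phi>0"
    unfolding bdB
  proof (rule cont_union)
    show "finite B" using CW_fin[OF CW1] BX finite_subset by blast
    show "\<And>T. T \<in> B \<Longrightarrow> closedin X T" using CW_closed[OF CW1] BX by blast
    show "\<And>T. T \<in> B \<Longrightarrow> continuous_map (subtopology X T) X' \<Phi>0" using GB unfolding good1_def by blast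
  qed
  obtain n \<alpha> n' \<alpha>' where a: "cell_param X n \<sigma> \<alpha>" and a': "cell_param X' n' (\<phi> \<sigma>) \<alpha>'"
    and Yc: "(\<sigma> \<inter> Y = {} \<and> \<phi> \<sigma> \<inter> Y' = {}) \<or>
     ({x \<in> disc n. \<alpha> x \<in> \<sigma> \<inter> Y} = disc n \<inter> Ek k \<and>
      {x \<in> disc n'. \<alpha>' x \<in> \<phi> \<sigma> \<inter> Y'} = disc n' \<inter> Ek k)"
    using params[OF s] by blast
  obtain ai where ai1: "\<And>x. x \<in> disc n \<Longrightarrow> ai (\<alpha> x) = x" and ai2: "\<And>y. y \<in> \<sigma> \<Longrightarrow> \<alpha> (ai y) = y"
    and ai3: "\<And>y. y \<in> \<sigma> \<Longrightarrow> ai y \<in> disc n"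
    and aic: "continuous_map (subtopology X \<sigma>) (top_of_set (disc n)) ai"
    using param_inv[OF a] by blast
  obtain ai' where ai1': "\<And>x. x \<in> disc n' \<Longrightarrow> ai' (\<alpha>' x) = x" and ai2': "\<And>y. y \<in> \<phi> \<sigma> \<Longrightarrow> \<alpha>' (ai' y) = y"
    and ai3': "\<And>y. y \<in> \<phi> \<sigma> \<Longrightarrow> ai' y \<in> disc n'"
    and aic': "continuous_map (subtopology X' (\<phi> \<sigma>)) (top_of_set (disc n')) ai'"
    using param_inv[OF a'] by blast
  have ad: "\<alpha> ` disc n = \<sigma>" and ac: "continuous_map (top_of_set (disc n)) X \<alpha>"
    using cell_param_facts[OF a] by auto
  have ad': "\<alpha>' ` disc n' = \<phi> \<sigma>" and ac': "continuous_map (top_of_set (disc n')) X' \<alpha>'"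
    using cell_param_facts[OF a'] by auto
  have abd: "\<alpha> ` disc_boundary n = bd" using cell_boundary_param[OF a] by (simp add: bd_def)
  have abd': "\<alpha>' ` disc_boundary n' = bd'" using cell_boundary_param[OF a'] by (simp add: bd'_def)
  have bds: "bd \<subseteq> \<sigma>" using abd ad sph_sub by blast
  have bds': "bd' \<subseteq> \<phi> \<sigma>" using abd' ad' sph_sub by blast
  define h where "h s = ai' (\<Phi>0 (\<alpha> s))" for s
  have hc: "continuous_on (disc_boundary n) h"
  proof -
    have c1: "continuous_map (top_of_set (disc_boundary n)) (subtopology X bd) \<alpha>"
    proof -
      have "continuous_map (top_of_set (disc_boundary n)) X \<alpha>"
        using continuous_map_from_subtopology[OF ac, of "disc_boundary n"] sph_sub
        by (simp add: subtopology_subtopology Int_absorb1)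
      then show ?thesis using abd by (force simp: continuous_map_in_subtopology Pi_iff)
    qed
    have c2: "continuous_map (subtopology X bd) (subtopology X' (\<phi> \<sigma>)) \<Phi>0"
      using cont0 img bds' by (force simp: continuous_map_in_subtopology Pi_iff)
    have "continuous_map (top_of_set (disc_boundary n)) (top_of_set (disc n')) (ai' \<circ> \<Phi>0 \<circ> \<alpha>)"
      using continuous_map_compose[OF continuous_map_compose[OF c1 c2] aic'] by (simp add: comp_assoc)
    moreover have "h = ai' \<circ> \<Phi>0 \<circ> \<alpha>" by (rule ext) (simp add: h_def)
    ultimately have "continuous_map (top_of_set (disc_boundary n)) (top_of_set (disc n')) h"
      by simp
    then show ?thesis by (metis continuous_map_subtopology_eu)
  qed
  have hi: "h ` disc_boundary n = disc_boundary n'"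
  proof -
    have "h ` disc_boundary n = ai' ` \<Phi>0 ` \<alpha> ` disc_boundary n" by (auto simp: h_def image_image)
    also have "\<dots> = ai' ` \<alpha>' ` disc_boundary n'" using abd img abd' by simp
    also have "\<dots> = disc_boundary n'" using ai1' sph_sub by (force simp: image_image)
    finally show ?thesis .
  qed
  have hj: "inj_on h (disc_boundary n)"
  proof (rule inj_onI)
    fix x y assume x: "x \<in> disc_boundary n" and y: "y \<in> disc_boundary n" and e: "h x = h y"
    have ax: "\<alpha> x \<in> bd" "\<alpha> y \<in> bd" using abd x y by blast+
    then have "\<Phi>0 (\<alpha> x) \<in> \<phi> \<sigma>" "\<Phi>0 (\<alpha> y) \<in> \<phi> \<sigma>" using img bds' by blast+
    then have "\<Phi>0 (\<alpha> x) = \<Phi>0 (\<alpha> y)" using e ai2' unfolding h_def by metis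
    then have "\<alpha> x = \<alpha> y" using inj0 ax by (meson inj_onD)
    then show "x = y" using ai1 x y sph_sub by (metis subsetD)
  qed
  obtain g where gc: "continuous_on (disc n) g" and gi: "g ` disc n = disc n'" and gj: "inj_on g (disc n)"
    and gh: "\<forall>x\<in>disc_boundary n. g x = h x"
    and gE: "\<And>k. h ` (disc_boundary n \<inter> Ek k) = disc_boundary n' \<inter> Ek k \<Longrightarrow>
           g ` (disc n \<inter> Ek k) = disc n' \<inter> Ek k"
    using cone_ext[OF hc hi hj] by blast
  define \<Psi> where "\<Psi> x = \<alpha>' (g (ai x))" for x
  have aiimg: "ai ` \<sigma> = disc n" using ai1 ai3 ad by force
  have Pimg: "\<Psi> ` \<sigma> = \<phi> \<sigma>"
  proof -
    have "\<Psi> ` \<sigma> = \<alpha>' ` g ` ai ` \<sigma>" by (auto simp: \<Psi>_def image_image)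
    then show ?thesis using aiimg gi ad' by simp
  qed
  have Pinj: "inj_on \<Psi> \<sigma>"
  proof (rule inj_onI)
    fix x y assume x: "x \<in> \<sigma>" and y: "y \<in> \<sigma>" and e: "\<Psi> x = \<Psi> y"
    have "g (ai x) \<in> disc n'" "g (ai y) \<in> disc n'" using gi ai3 x y by blast+
    then have "g (ai x) = g (ai y)" using e ai1' unfolding \<Psi>_def by metis
    then have "ai x = ai y" using gj ai3 x y by (meson inj_onD)
    then show "x = y" using ai2 x y by metis
  qed
  have Pc: "continuous_map (subtopology X \<sigma>) X' \<Psi>"
  proof -
    have g1: "continuous_map (top_of_set (disc n)) (top_of_set (disc n')) g"
      using gc gi by auto
    have "continuous_map (subtopology X \<sigma>) X' (\<alpha>' \<circ> g \<circ> ai)"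
      using continuous_map_compose[OF continuous_map_compose[OF aic g1] ac'] by (simp add: comp_assoc)
    moreover have "\<Psi> = \<alpha>' \<circ> g \<circ> ai" by (rule ext) (simp add: \<Psi>_def)
    ultimately show ?thesis by simp
  qed
  have Pbd: "\<Psi> x = \<Phi>0 x" if x: "x \<in> bd" for x
  proof -
    obtain t where t: "t \<in> disc_boundary n" "x = \<alpha> t" using abd x by blast
    have "ai x = t" using ai1 t sph_sub by blast
    then have "g (ai x) = ai' (\<Phi>0 x)" using gh t by (simp add: h_def)
    moreover have "\<Phi>0 x \<in> \<phi> \<sigma>" using img bds' x by blast
    ultimately show ?thesis using ai2' by (simp add: \<Psi>_def)
  qed
  have Pbdimg: "\<Psi> ` bd = bd'" using Pbd img by (metis image_cong)
  have Pint: "\<Psi> ` cell_interior X \<sigma> = cell_interior X' (\<phi> \<sigma>)"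
  proof -
    have "\<Psi> ` (\<sigma> - bd) = \<Psi> ` \<sigma> - \<Psi> ` bd" using Pinj bds by (intro inj_on_image_set_diff) auto
    then show ?thesis using Pimg Pbdimg by (simp add: cell_interior_def bd_def bd'_def)
  qed
  have PY: "\<Psi> ` (\<sigma> \<inter> Y) = \<phi> \<sigma> \<inter> Y'"
  proof (cases "\<sigma> \<inter> Y = {} \<and> \<phi> \<sigma> \<inter> Y' = {}")
    case True then show ?thesis by simp
  next
    case False
    then have P1: "{x \<in> disc n. \<alpha> x \<in> \<sigma> \<inter> Y} = disc n \<inter> Ek k"
      and P2: "{x \<in> disc n'. \<alpha>' x \<in> \<phi> \<sigma> \<inter> Y'} = disc n' \<inter> Ek k" using Yc by blast+
    have q1: "ai ` (\<sigma> \<inter> Y) = disc n \<inter> Ek k"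
    proof
      show "ai ` (\<sigma> \<inter> Y) \<subseteq> disc n \<inter> Ek k"
      proof
        fix z assume "z \<in> ai ` (\<sigma> \<inter> Y)"
        then obtain y where y: "y \<in> \<sigma> \<inter> Y" "z = ai y" by blast
        then have "z \<in> {x \<in> disc n. \<alpha> x \<in> \<sigma> \<inter> Y}" using ai2 ai3 by auto
        then show "z \<in> disc n \<inter> Ek k" using P1 by blast
      qed
      show "disc n \<inter> Ek k \<subseteq> ai ` (\<sigma> \<inter> Y)"
      proof
        fix z assume "z \<in> disc n \<inter> Ek k"
        then have z: "z \<in> disc n" "\<alpha> z \<in> \<sigma> \<inter> Y" using P1 by blast+
        then show "z \<in> ai ` (\<sigma> \<inter> Y)" using ai1 by (metis image_eqI)
      qed
    qed
    have q2: "\<alpha>' ` (disc n' \<inter> Ek k) = \<phi> \<sigma> \<inter> Y'"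
    proof
      show "\<alpha>' ` (disc n' \<inter> Ek k) \<subseteq> \<phi> \<sigma> \<inter> Y'" using P2 by blast
      show "\<phi> \<sigma> \<inter> Y' \<subseteq> \<alpha>' ` (disc n' \<inter> Ek k)"
      proof
        fix y assume y: "y \<in> \<phi> \<sigma> \<inter> Y'"
        then have "ai' y \<in> {x \<in> disc n'. \<alpha>' x \<in> \<phi> \<sigma> \<inter> Y'}" using ai2' ai3' by auto
        then have "ai' y \<in> disc n' \<inter> Ek k" using P2 by blast
        then show "y \<in> \<alpha>' ` (disc n' \<inter> Ek k)" using ai2' y by (metis IntD1 image_eqI)
      qed
    qed
    have r1: "\<alpha> ` (disc_boundary n \<inter> Ek k) = bd \<inter> Y"
    proof
      show "\<alpha> ` (disc_boundary n \<inter> Ek k) \<subseteq> bd \<inter> Y"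
      proof
        fix y assume "y \<in> \<alpha> ` (disc_boundary n \<inter> Ek k)"
        then obtain t where t: "t \<in> disc_boundary n" "t \<in> Ek k" "y = \<alpha> t" by blast
        then have "t \<in> {x \<in> disc n. \<alpha> x \<in> \<sigma> \<inter> Y}" using P1 sph_sub by blast
        then show "y \<in> bd \<inter> Y" using t abd by blast
      qed
      show "bd \<inter> Y \<subseteq> \<alpha> ` (disc_boundary n \<inter> Ek k)"
      proof
        fix y assume y: "y \<in> bd \<inter> Y"
        then obtain t where t: "t \<in> disc_boundary n" "y = \<alpha> t" using abd by blast
        then have "t \<in> {x \<in> disc n. \<alpha> x \<in> \<sigma> \<inter> Y}" using y sph_sub bds by blast
        then have "t \<in> Ek k" using P1 by blast
        then show "y \<in> \<alpha> ` (disc_boundary n \<inter> Ek k)" using t by blast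
      qed
    qed
    have r3: "ai' ` (bd' \<inter> Y') = disc_boundary n' \<inter> Ek k"
    proof
      show "ai' ` (bd' \<inter> Y') \<subseteq> disc_boundary n' \<inter> Ek k"
      proof
        fix z assume "z \<in> ai' ` (bd' \<inter> Y')"
        then obtain y where y: "y \<in> bd'" "y \<in> Y'" "z = ai' y" by blast
        then obtain t where t: "t \<in> disc_boundary n'" "y = \<alpha>' t" using abd' by blast
        then have zt: "z = t" using y ai1' sph_sub by blast
        have "t \<in> {x \<in> disc n'. \<alpha>' x \<in> \<phi> \<sigma> \<inter> Y'}" using t y bds' sph_sub by blast
        then show "z \<in> disc_boundary n' \<inter> Ek k" using P2 t zt by blast
      qed
      show "disc_boundary n' \<inter> Ek k \<subseteq> ai' ` (bd' \<inter> Y')"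
      proof
        fix t assume t: "t \<in> disc_boundary n' \<inter> Ek k"
        then have "t \<in> disc n' \<inter> Ek k" using sph_sub by blast
        then have "\<alpha>' t \<in> Y'" using P2 by blast
        moreover have "\<alpha>' t \<in> bd'" using abd' t by blast
        moreover have "ai' (\<alpha>' t) = t" using ai1' t sph_sub by blast
        ultimately show "t \<in> ai' ` (bd' \<inter> Y')" by (metis IntI image_eqI)
      qed
    qed
    have "h ` (disc_boundary n \<inter> Ek k) = ai' ` \<Phi>0 ` \<alpha> ` (disc_boundary n \<inter> Ek k)"
      by (auto simp: h_def image_image)
    also have "\<dots> = disc_boundary n' \<inter> Ek k" using r1 imgY r3 by simp
    finally have "g ` (disc n \<inter> Ek k) = disc n' \<inter> Ek k" using gE by blast
    moreover have "\<Psi> ` (\<sigma> \<inter> Y) = \<alpha>' ` g ` ai ` (\<sigma> \<inter> Y)" by (auto simp: \<Psi>_def image_image)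
    ultimately show ?thesis using q1 q2 by simp
  qed
  have "good \<sigma> \<Psi>" unfolding good1_def using Pimg Pinj Pc PY Pint by blast
  then show ?thesis using that Pbd unfolding bd_def by blast
qed

end


context
  fixes X :: "'a topology" and X' :: "'b topology"
    and \<X> :: "'a set set" and \<X>' :: "'b set set"
    and Y :: "'a set" and Y' :: "'b set" and k :: nat
    and \<phi> :: "'a set \<Rightarrow> 'b set"
  assumes A1: "finite_regular_CW_pair X \<X> Y k"
    and A2: "finite_regular_CW_pair X' \<X>' Y' k"
    and A3: "poset_iso \<phi> \<X> \<X>'"
    and A4: "\<phi> ` cells_meeting \<X> Y = cells_meeting \<X>' Y'"
begin

lemma CW1': "finite_regular_CW X \<X>" using A1 by (simp add: finite_regular_CW_pair_def)
lemma CW2': "finite_regular_CW X' \<X>'" using A2 by (simp add: finite_regular_CW_pair_def)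
lemmas dd = downclosed_def[OF A1 A2 A3 A4]

lemma ext_all: "downclosed \<X> S \<Longrightarrow> \<exists>\<Phi>. \<forall>\<sigma>\<in>S. good1 X X' Y Y' \<phi> \<sigma> \<Phi>"
proof (induction "card S" arbitrary: S rule: less_induct)
  case less
  show ?case
  proof (cases "S = {}")
    case True then show ?thesis by auto
  next
    case False
    have SX: "S \<subseteq> \<X>" using less.prems unfolding dd by blast
    have fin: "finite S" using SX CW_fin[OF CW1'] finite_subset by blast
    obtain \<sigma> where sg: "\<sigma> \<in> S" "\<forall>b\<in>S. \<sigma> \<le> b \<longrightarrow> \<sigma> = b"
      using finite_has_maximal[OF fin False] by blast
    have sX: "\<sigma> \<in> \<X>" using SX sg(1) by blast
    have D': "downclosed \<X> (S - {\<sigma>})"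
      unfolding dd
    proof (intro conjI ballI impI)
      show "S - {\<sigma>} \<subseteq> \<X>" using SX by blast
      fix \<rho> \<tau> assume r: "\<rho> \<in> S - {\<sigma>}" and t: "\<tau> \<in> \<X>" and tr: "\<tau> \<subseteq> \<rho>"
      have "\<tau> \<in> S" using less.prems r t tr unfolding dd by blast
      moreover have "\<tau> \<noteq> \<sigma>"
      proof
        assume "\<tau> = \<sigma>"
        then have "\<sigma> \<le> \<rho>" using tr by simp
        then show False using sg(2) r by blast
      qed
      ultimately show "\<tau> \<in> S - {\<sigma>}" by blast
    qed
    have cl: "card (S - {\<sigma>}) < card S" using card_Diff1_less[OF fin sg(1)] .
    obtain \<Phi>0 where G0: "\<forall>\<rho>\<in>S - {\<sigma>}. good1 X X' Y Y' \<phi> \<rho> \<Phi>0" using less.hyps[OF cl D'] by blast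
    have Gb: "good1 X X' Y Y' \<phi> \<tau> \<Phi>0" if t: "\<tau> \<in> \<X>" "\<tau> \<subset> \<sigma>" for \<tau>
    proof -
      have "\<tau> \<in> S" using less.prems t sg(1) unfolding dd by blast
      then show ?thesis using G0 t(2) by blast
    qed
    obtain \<Psi> where GP: "good1 X X' Y Y' \<phi> \<sigma> \<Psi>" and ag: "\<And>x. x \<in> cell_boundary X \<sigma> \<Longrightarrow> \<Psi> x = \<Phi>0 x"
      using step[OF A1 A2 A3 A4 sX Gb] by blast
    define \<Phi> where "\<Phi> x = (if x \<in> cell_interior X \<sigma> then \<Psi> x else \<Phi>0 x)" for x
    have "good1 X X' Y Y' \<phi> \<sigma> \<Phi>"
    proof (rule good1_cong[OF GP])
      fix x assume x: "x \<in> \<sigma>"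
      show "\<Psi> x = \<Phi> x"
      proof (cases "x \<in> cell_interior X \<sigma>")
        case True then show ?thesis by (simp add: \<Phi>_def)
      next
        case False
        then have "x \<in> cell_boundary X \<sigma>" using x by (simp add: cell_interior_def)
        then show ?thesis using False ag by (simp add: \<Phi>_def)
      qed
    qed
    moreover have "good1 X X' Y Y' \<phi> \<rho> \<Phi>" if r: "\<rho> \<in> S - {\<sigma>}" for \<rho>
    proof (rule good1_cong)
      show "good1 X X' Y Y' \<phi> \<rho> \<Phi>0" using G0 r by blast
      fix x assume x: "x \<in> \<rho>"
      have rX: "\<rho> \<in> \<X>" using r SX by blast
      have "x \<notin> cell_interior X \<sigma>"
      proof
        assume "x \<in> cell_interior X \<sigma>"
        then have "cell_interior X \<sigma> \<inter> \<rho> \<noteq> {}" using x by blast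
        then have "\<sigma> \<subseteq> \<rho>" using CW_meet[OF CW1' rX sX] by blast
        then show False using sg(2) r by blast
      qed
      then show "\<Phi>0 x = \<Phi> x" by (simp add: \<Phi>_def)
    qed
    ultimately have "\<forall>\<rho>\<in>S. good1 X X' Y Y' \<phi> \<rho> \<Phi>" by blast
    then show ?thesis by blast
  qed
qed

lemma main_ctx: "\<exists>\<Phi>. homeomorphic_map X X' \<Phi> \<and> (\<forall>\<sigma>\<in>\<X>. \<Phi> ` \<sigma> = \<phi> \<sigma>) \<and> \<Phi> ` Y = Y'"
proof -
  have D: "downclosed \<X> \<X>" by (auto simp: dd)
  obtain \<Phi> where G: "\<forall>\<sigma>\<in>\<X>. good1 X X' Y Y' \<phi> \<sigma> \<Phi>" using ext_all[OF D] by blast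
  have U: "\<Union>\<X> = topspace X" by (rule CW_union[OF CW1'])
  have U': "\<Union>\<X>' = topspace X'" by (rule CW_union[OF CW2'])
  have fin: "finite \<X>" by (rule CW_fin[OF CW1'])
  have img: "\<Phi> ` \<sigma> = \<phi> \<sigma>" if "\<sigma> \<in> \<X>" for \<sigma> using G that by (simp add: good1_def)
  have "continuous_map (subtopology X (\<Union>\<X>)) X' \<Phi>"
  proof (rule cont_union[OF fin])
    show "\<And>T. T \<in> \<X> \<Longrightarrow> closedin X T" using CW_closed[OF CW1'] by blast
    show "\<And>T. T \<in> \<X> \<Longrightarrow> continuous_map (subtopology X T) X' \<Phi>" using G by (simp add: good1_def)
  qed
  then have cont: "continuous_map X X' \<Phi>" using U by simp
  have bijp: "\<phi> ` \<X> = \<X>'" using A3 by (simp add: poset_iso_def bij_betw_def)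
  have surj: "\<Phi> ` topspace X = topspace X'"
  proof -
    have "\<Phi> ` topspace X = (\<Union>\<sigma>\<in>\<X>. \<Phi> ` \<sigma>)" using U[symmetric] by (simp add: image_Union)
    also have "\<dots> = (\<Union>\<sigma>\<in>\<X>. \<phi> \<sigma>)" by (rule SUP_cong) (auto simp: img)
    also have "\<dots> = \<Union>\<X>'" using bijp by simp
    finally show ?thesis using U' by simp
  qed
  have "inj_on \<Phi> (\<Union>\<X>)" by (rule inj_union[OF A1 A2 A3 A4 D]) (use G in blast)
  then have inj: "inj_on \<Phi> (topspace X)" using U by simp
  have comp: "compact_space X"
  proof -
    have "compactin X (\<Union>\<X>)" by (rule compactin_Union[OF fin]) (rule CW_compact[OF CW1'])
    then show ?thesis using U by (simp add: compact_space_def)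
  qed
  have hm: "homeomorphic_map X X' \<Phi>"
    using continuous_imp_homeomorphic_map[OF cont comp CW_haus[OF CW2'] surj inj] .
  have YX: "Y \<subseteq> topspace X" using A1 by (simp add: finite_regular_CW_pair_def)
  have YX': "Y' \<subseteq> topspace X'" using A2 by (simp add: finite_regular_CW_pair_def)
  have GY: "\<Phi> ` (\<sigma> \<inter> Y) = \<phi> \<sigma> \<inter> Y'" if "\<sigma> \<in> \<X>" for \<sigma> using G that by (simp add: good1_def)
  have Yeq: "Y = (\<Union>\<sigma>\<in>\<X>. \<sigma> \<inter> Y)" using YX U by auto
  have "\<Phi> ` Y = (\<Union>\<sigma>\<in>\<X>. \<Phi> ` (\<sigma> \<inter> Y))" by (subst Yeq) (simp only: image_UN)
  also have "\<dots> = (\<Union>\<sigma>\<in>\<X>. \<phi> \<sigma> \<inter> Y')" by (rule SUP_cong) (auto simp: GY)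
  also have "\<dots> = (\<Union>\<sigma>\<in>\<X>. \<phi> \<sigma>) \<inter> Y'" by auto
  also have "\<dots> = (\<Union>\<X>') \<inter> Y'" using bijp by simp
  also have "\<dots> = Y'" using U' YX' by auto
  finally show ?thesis using hm img by blast
qed

end


theorem mainTheorem13:
  fixes X :: "'a topology" and X' :: "'b topology"
    and \<X> :: "'a set set" and \<X>' :: "'b set set"
    and Y :: "'a set" and Y' :: "'b set" and k :: nat
    and \<phi> :: "'a set \<Rightarrow> 'b set"
  assumes "finite_regular_CW_pair X \<X> Y k"
    and "finite_regular_CW_pair X' \<X>' Y' k"
    and "poset_iso \<phi> \<X> \<X>'"
    and "\<phi> ` cells_meeting \<X> Y = cells_meeting \<X>' Y'"
  shows "\<exists>\<Phi>. homeomorphic_map X X' \<Phi> \<and> (\<forall>\<sigma>\<in>\<X>. \<Phi> ` \<sigma> = \<phi> \<sigma>) \<and> \<Phi> ` Y = Y'"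
  using main_ctx[OF assms] .

end
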